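(* For every (nonempty) composition $\alpha$, the monomial quasi-symmetric function $M_\alpha$ is irreducible both in $\mathrm{QSym}$ and in $K=\mathbb Z[[x_1,x_2,\dots]]$ (power series of bounded degree).
   Context: For a composition $\alpha=(\alpha_1,\dots,\alpha_k)$ (positive integers), $M_\alpha=\sum_{i_1<\dots<i_k}x_{i_1}^{\alpha_1}\cdots x_{i_k}^{\alpha_k}$. $\mathrm{QSym}\subseteq K$ is the ring of quasi-symmetric functions (bounded-degree series whose coefficient of $x_{i_1}^{a_1}\cdots x_{i_k}^{a_k}$ depends only on $(a_1,\dots,a_k)$ for $i_1<\dots<i_k$). The units of $K$ and of $\mathrm{QSym}$ are $\pm1$. *)

theory Defs
  imports Main "HOL-Library.Poly_Mapping"
begin

text \<open>Monomials in x_1, x_2, ... are finitely supported exponent maps nat =>0 nat.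
 An element of K = Z[[x_1,x_2,...]] of bounded degree is a coefficient function
 on monomials whose support has bounded total degree.\<close>

type_synonym monom = "nat \<Rightarrow>\<^sub>0 nat"
type_synonym series = "monom \<Rightarrow> int"

definition mdeg :: "monom \<Rightarrow> nat" where
  "mdeg m = (\<Sum>i\<in>Poly_Mapping.keys m. Poly_Mapping.lookup m i)"

text \<open>Exponent sequence (a_1,...,a_k) of a monomial x_i1^a1 ... x_ik^ak with i1 < ... < ik.\<close>
definition compress :: "monom \<Rightarrow> nat list" where
  "compress m = map (Poly_Mapping.lookup m) (sorted_list_of_set (Poly_Mapping.keys m))"

definition K :: "series set" where
  "K = {f. \<exists>d. \<forall>m. f m \<noteq> 0 \<longrightarrow> mdeg m \<le> d}"

definition QSym :: "series set" where
  "QSym = {f \<in> K. \<forall>m m'. compress m = compress m' \<longrightarrow> f m = f m'}"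

definition kzero :: series where "kzero = (\<lambda>_. 0)"
definition kone :: series where "kone = (\<lambda>m. if m = 0 then 1 else 0)"

definition kmult :: "series \<Rightarrow> series \<Rightarrow> series" where
  "kmult f g = (\<lambda>m. \<Sum>a\<in>{a. \<forall>i. Poly_Mapping.lookup a i \<le> Poly_Mapping.lookup m i}. f a * g (m - a))"

definition unit_in :: "series set \<Rightarrow> series \<Rightarrow> bool" where
  "unit_in R u \<longleftrightarrow> u \<in> R \<and> (\<exists>v\<in>R. kmult u v = kone)"

definition irreducible_in :: "series set \<Rightarrow> series \<Rightarrow> bool" where
  "irreducible_in R p \<longleftrightarrow> p \<in> R \<and> p \<noteq> kzero \<and> \<not> unit_in R p \<and>
     (\<forall>a\<in>R. \<forall>b\<in>R. p = kmult a b \<longrightarrow> unit_in R a \<or> unit_in R b)"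

definition is_composition :: "nat list \<Rightarrow> bool" where
  "is_composition \<alpha> \<longleftrightarrow> \<alpha> \<noteq> [] \<and> (\<forall>a\<in>set \<alpha>. 0 < a)"

definition monomialQ :: "nat list \<Rightarrow> series" ("M") where
  "M \<alpha> = (\<lambda>m. if compress m = \<alpha> then 1 else 0)"

end

theory Submission
  imports Defs "HOL-Computational_Algebra.Polynomial" Complex_Main
begin


definition Lset :: "monom \<Rightarrow> monom set" where
  "Lset m = {a. \<forall>i. Poly_Mapping.lookup a i \<le> Poly_Mapping.lookup m i}"

definition Sset :: "nat set \<Rightarrow> nat \<Rightarrow> monom set" where
  "Sset W D = {m. Poly_Mapping.keys m \<subseteq> W \<and> mdeg m \<le> D}"

definition bnd :: "series \<Rightarrow> nat \<Rightarrow> bool" where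
  "bnd f D \<longleftrightarrow> (\<forall>m. f m \<noteq> 0 \<longrightarrow> mdeg m \<le> D)"

lemma K_bnd: "f \<in> K \<longleftrightarrow> (\<exists>D. bnd f D)"
  unfolding K_def bnd_def by auto

lemma mdeg_sum:
  assumes "finite X" "Poly_Mapping.keys m \<subseteq> X"
  shows "mdeg m = (\<Sum>i\<in>X. Poly_Mapping.lookup m i)"
  unfolding mdeg_def
  by (rule sum.mono_neutral_left) (use assms in \<open>auto simp: in_keys_iff\<close>)

lemma mdeg_add: "mdeg (a + b) = mdeg a + mdeg b"
proof -
  let ?X = "Poly_Mapping.keys a \<union> Poly_Mapping.keys b"
  have "mdeg (a + b) = (\<Sum>i\<in>?X. Poly_Mapping.lookup (a+b) i)"
    by (rule mdeg_sum) (insert keys_add[of a b], auto)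
  also have "\<dots> = (\<Sum>i\<in>?X. Poly_Mapping.lookup a i) + (\<Sum>i\<in>?X. Poly_Mapping.lookup b i)"
    by (simp add: lookup_add sum.distrib)
  also have "\<dots> = mdeg a + mdeg b"
    by (subst (1 2) mdeg_sum[of ?X]) auto
  finally show ?thesis .
qed

lemma lookup_le_mdeg: "Poly_Mapping.lookup m i \<le> mdeg m"
proof (cases "i \<in> Poly_Mapping.keys m")
  case True then show ?thesis unfolding mdeg_def
    by (intro member_le_sum) auto
next
  case False then show ?thesis by (simp add: in_keys_iff)
qed

lemma mdeg_0[simp]: "mdeg 0 = 0" by (simp add: mdeg_def)

lemma mdeg_single[simp]: "mdeg (Poly_Mapping.single s d) = d"
  by (simp add: mdeg_def)

lemma finite_Sset: assumes "finite W" shows "finite (Sset W D)"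
proof -
  let ?F = "{f. \<forall>x. (x \<in> W \<longrightarrow> f x \<in> {..D}) \<and> (x \<notin> W \<longrightarrow> f x = (0::nat))}"
  have fin: "finite ?F" by (rule finite_set_of_finite_funs) (use assms in auto)
  have "Poly_Mapping.lookup ` Sset W D \<subseteq> ?F"
  proof
    fix h assume "h \<in> Poly_Mapping.lookup ` Sset W D"
    then obtain m where m: "m \<in> Sset W D" "h = Poly_Mapping.lookup m" by blast
    have "\<forall>x. (x \<in> W \<longrightarrow> h x \<in> {..D}) \<and> (x \<notin> W \<longrightarrow> h x = 0)"
    proof (intro allI conjI impI)
      fix x show "h x \<in> {..D}" using m lookup_le_mdeg[of m x] unfolding Sset_def by auto
    next
      fix x assume "x \<notin> W" then show "h x = 0" using m unfolding Sset_def
        by (auto simp: in_keys_iff)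
    qed
    then show "h \<in> ?F" by simp
  qed
  then have "finite (Poly_Mapping.lookup ` Sset W D)" using fin finite_subset by blast
  then show ?thesis
    by (rule finite_imageD) (intro inj_onI, simp add: poly_mapping.lookup_inject)
qed

lemma le_mdeg_mono:
  assumes "\<forall>i. Poly_Mapping.lookup a i \<le> Poly_Mapping.lookup m i"
  shows "mdeg a \<le> mdeg m" and "Poly_Mapping.keys a \<subseteq> Poly_Mapping.keys m"
proof -
  show ks: "Poly_Mapping.keys a \<subseteq> Poly_Mapping.keys m"
  proof
    fix x assume "x \<in> Poly_Mapping.keys a"
    then have "Poly_Mapping.lookup a x \<noteq> 0" by (simp add: in_keys_iff)
    moreover have "Poly_Mapping.lookup a x \<le> Poly_Mapping.lookup m x" using assms by blast
    ultimately show "x \<in> Poly_Mapping.keys m" by (simp add: in_keys_iff)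
  qed
  have "mdeg a = (\<Sum>i\<in>Poly_Mapping.keys m. Poly_Mapping.lookup a i)"
    by (rule mdeg_sum) (use ks in auto)
  also have "\<dots> \<le> mdeg m" unfolding mdeg_def by (rule sum_mono) (use assms in auto)
  finally show "mdeg a \<le> mdeg m" .
qed

lemma Lset_sub: "Lset m \<subseteq> Sset (Poly_Mapping.keys m) (mdeg m)"
proof (rule subsetI)
  fix a assume "a \<in> Lset m"
  then have "\<forall>i. Poly_Mapping.lookup a i \<le> Poly_Mapping.lookup m i" by (simp add: Lset_def)
  then show "a \<in> Sset (Poly_Mapping.keys m) (mdeg m)"
    using le_mdeg_mono[of a m] unfolding Sset_def by blast
qed

lemma finite_Lset: "finite (Lset m)"
  by (rule finite_subset[OF Lset_sub finite_Sset]) simp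

lemma add_diff_le:
  assumes "\<forall>i. Poly_Mapping.lookup a i \<le> Poly_Mapping.lookup m i"
  shows "a + (m - a) = (m::monom)"
proof (rule poly_mapping_eqI)
  fix k have "Poly_Mapping.lookup a k \<le> Poly_Mapping.lookup m k" using assms by blast
  then show "Poly_Mapping.lookup (a + (m - a)) k = Poly_Mapping.lookup m k"
    by (simp add: lookup_add lookup_minus)
qed

lemma add_diff_cancel_pm: "(a + b) - a = (b::monom)"
  by (rule poly_mapping_eqI) (simp add: lookup_add lookup_minus)

lemma keys_diff_sub: "Poly_Mapping.keys (m - a) \<subseteq> Poly_Mapping.keys (m::monom)"
  by (auto simp: in_keys_iff lookup_minus)


lemma kmult_Lset: "kmult f g m = (\<Sum>a\<in>Lset m. f a * g (m - a))"
  unfolding kmult_def Lset_def by simp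

lemma Lset_iff: "a \<in> Lset m \<longleftrightarrow> (\<forall>i. Poly_Mapping.lookup a i \<le> Poly_Mapping.lookup m i)"
  by (simp add: Lset_def)

lemma diff_in_Lset: "a \<in> Lset m \<Longrightarrow> m - a \<in> Lset m"
  by (simp add: Lset_iff lookup_minus)

lemma diff_diff_Lset: "a \<in> Lset m \<Longrightarrow> m - (m - a) = a"
  by (rule poly_mapping_eqI) (simp add: Lset_iff lookup_minus)

lemma kmult_commute: "kmult f g = kmult g f"
proof (rule ext)
  fix m
  show "kmult f g m = kmult g f m"
    unfolding kmult_Lset
    by (rule sum.reindex_bij_witness[where i="\<lambda>a. m - a" and j="\<lambda>a. m - a"])
       (auto simp: diff_in_Lset diff_diff_Lset mult.commute)
qed

lemma kmult_nonzero_ex: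
  assumes "kmult f g m \<noteq> 0"
  shows "\<exists>a. a \<in> Lset m \<and> f a \<noteq> 0 \<and> g (m - a) \<noteq> 0"
proof (rule ccontr)
  assume "\<not> ?thesis"
  then have "\<forall>a\<in>Lset m. f a * g (m - a) = 0" by auto
  then have "kmult f g m = 0" unfolding kmult_Lset by (rule sum.neutral)
  with assms show False by simp
qed

lemma bnd_kmult:
  assumes "bnd f D1" "bnd g D2"
  shows "bnd (kmult f g) (D1 + D2)"
  unfolding bnd_def
proof (intro allI impI)
  fix m assume "kmult f g m \<noteq> 0"
  then obtain a where a: "a \<in> Lset m" "f a \<noteq> 0" "g (m - a) \<noteq> 0"
    using kmult_nonzero_ex by blast
  have "mdeg m = mdeg a + mdeg (m - a)"
    using add_diff_le[of a m] a(1) mdeg_add[of a "m - a"] by (simp add: Lset_iff)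
  then show "mdeg m \<le> D1 + D2" using a assms unfolding bnd_def
    by (metis add_le_mono)
qed

lemma kmult_K: "f \<in> K \<Longrightarrow> g \<in> K \<Longrightarrow> kmult f g \<in> K"
  using bnd_kmult K_bnd by blast

lemma kmult_zero_left: "kmult (\<lambda>_. 0) g = (\<lambda>_. 0)"
  unfolding kmult_def by simp

lemma kmult_zero_right: "kmult f (\<lambda>_. 0) = (\<lambda>_. 0)"
  unfolding kmult_def by simp

section \<open>Evaluation\<close>

definition mon :: "nat set \<Rightarrow> (nat \<Rightarrow> 'a::comm_ring_1) \<Rightarrow> monom \<Rightarrow> 'a" where
  "mon V v m = (\<Prod>i\<in>V. v i ^ Poly_Mapping.lookup m i)"

definition ev :: "nat set \<Rightarrow> nat \<Rightarrow> (nat \<Rightarrow> 'a::comm_ring_1) \<Rightarrow> series \<Rightarrow> 'a" where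
  "ev V D v f = (\<Sum>m\<in>Sset V D. of_int (f m) * mon V v m)"

lemma mon_add: "mon V v (a + b) = mon V v a * mon V v b"
  unfolding mon_def by (simp add: lookup_add power_add prod.distrib)

lemma ev_indep:
  assumes "finite V" "bnd f D1" "D1 \<le> D2"
  shows "ev V D2 v f = ev V D1 v f"
  unfolding ev_def
proof (rule sum.mono_neutral_right)
  show "finite (Sset V D2)" using assms finite_Sset by blast
  show "Sset V D1 \<subseteq> Sset V D2" using assms(3) by (auto simp: Sset_def)
  show "\<forall>m\<in>Sset V D2 - Sset V D1. of_int (f m) * mon V v m = 0"
  proof
    fix m assume m: "m \<in> Sset V D2 - Sset V D1"
    then have "f m = 0" using assms(2) m unfolding Sset_def bnd_def by auto
    then show "of_int (f m) * mon V v m = 0" by simp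
  qed
qed

lemma ev_indep2:
  assumes "finite V" "bnd f D1" "bnd f D2"
  shows "ev V D1 v f = ev V D2 v f"
  using ev_indep[OF assms(1,2), of "max D1 D2" v] ev_indep[OF assms(1,3), of "max D1 D2" v] by simp

lemma ev_mult:
  assumes V: "finite V" and f: "bnd f D1" and g: "bnd g D2"
  shows "ev V (D1 + D2) v (kmult f g) = ev V D1 v f * ev V D2 v g"
proof -
  define D where "D = D1 + D2"
  define Q where "Q = {(a,b). Poly_Mapping.keys a \<subseteq> V \<and> Poly_Mapping.keys b \<subseteq> V \<and> mdeg a + mdeg b \<le> D}"
  define F where "F = (\<lambda>(a,b). of_int (f a * g b) * mon V v (a + b))"
  have finQ: "finite Q"
  proof (rule finite_subset)
    show "Q \<subseteq> Sset V D \<times> Sset V D" by (auto simp: Q_def Sset_def)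
    show "finite (Sset V D \<times> Sset V D)" using finite_Sset[OF V] by blast
  qed
  have "ev V D1 v f * ev V D2 v g = (\<Sum>a\<in>Sset V D1. \<Sum>b\<in>Sset V D2. of_int (f a) * mon V v a * (of_int (g b) * mon V v b))"
    unfolding ev_def by (rule sum_product)
  also have "\<dots> = (\<Sum>p\<in>Sset V D1 \<times> Sset V D2. F p)"
    unfolding sum.cartesian_product F_def by (rule sum.cong) (auto simp: mon_add)
  also have "\<dots> = (\<Sum>p\<in>Q. F p)"
  proof (rule sum.mono_neutral_left[OF finQ])
    show "Sset V D1 \<times> Sset V D2 \<subseteq> Q" by (auto simp: Q_def Sset_def D_def)
    show "\<forall>p\<in>Q - Sset V D1 \<times> Sset V D2. F p = 0"
    proof
      fix p assume p: "p \<in> Q - Sset V D1 \<times> Sset V D2"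
      then obtain a b where ab: "p = (a,b)" "Poly_Mapping.keys a \<subseteq> V" "Poly_Mapping.keys b \<subseteq> V"
        by (auto simp: Q_def)
      with p have "\<not> mdeg a \<le> D1 \<or> \<not> mdeg b \<le> D2" by (auto simp: Sset_def)
      then have "f a = 0 \<or> g b = 0" using f g unfolding bnd_def by blast
      then show "F p = 0" using ab by (auto simp: F_def)
    qed
  qed
  also have "\<dots> = (\<Sum>(m,a)\<in>Sigma (Sset V D) Lset. of_int (f a * g (m - a)) * mon V v m)"
  proof -
    have r1: "(a + b) - a = b" for a b :: monom by (rule add_diff_cancel_pm)
    have r2: "a + b \<in> Sset V D \<and> a \<in> Lset (a + b)" if "(a,b) \<in> Q" for a b
    proof -
      have q: "Poly_Mapping.keys a \<subseteq> V" "Poly_Mapping.keys b \<subseteq> V" "mdeg a + mdeg b \<le> D"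
        using that by (auto simp: Q_def)
      have "Poly_Mapping.keys (a + b) \<subseteq> V" using q keys_add[of a b] by blast
      moreover have "mdeg (a + b) \<le> D" using q mdeg_add by simp
      moreover have "a \<in> Lset (a + b)" by (simp add: Lset_iff lookup_add)
      ultimately show ?thesis by (simp add: Sset_def)
    qed
    have r3: "a + (m - a) = m \<and> (a, m - a) \<in> Q" if "(m,a) \<in> Sigma (Sset V D) Lset" for m a
    proof -
      have p: "m \<in> Sset V D" "a \<in> Lset m" using that by auto
      have le: "\<forall>i. Poly_Mapping.lookup a i \<le> Poly_Mapping.lookup m i" using p by (simp add: Lset_iff)
      have am: "a + (m - a) = m" using add_diff_le[OF le] .
      have "Poly_Mapping.keys a \<subseteq> V" using le_mdeg_mono(2)[OF le] p by (auto simp: Sset_def)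
      moreover have "Poly_Mapping.keys (m - a) \<subseteq> V" using keys_diff_sub[of m a] p by (auto simp: Sset_def)
      moreover have "mdeg a + mdeg (m - a) \<le> D" using p am mdeg_add[of a "m - a"] by (simp add: Sset_def)
      ultimately show ?thesis using am by (simp add: Q_def)
    qed
    show ?thesis
      by (rule sum.reindex_bij_witness[where j="\<lambda>(a,b). (a+b, a)" and i="\<lambda>(m,a). (a, m - a)"])
         (auto simp: r1 r2 r3 F_def)
  qed
  also have "\<dots> = (\<Sum>m\<in>Sset V D. \<Sum>a\<in>Lset m. of_int (f a * g (m - a)) * mon V v m)"
    by (rule sum.Sigma[symmetric]) (use finite_Sset[OF V] finite_Lset in auto)
  also have "\<dots> = ev V D v (kmult f g)"
    unfolding ev_def kmult_Lset by (simp add: sum_distrib_right)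
  finally show ?thesis by (simp add: D_def)
qed



section \<open>Kronecker substitution\<close>

definition code :: "nat \<Rightarrow> nat \<Rightarrow> monom \<Rightarrow> nat" where
  "code N B m = (\<Sum>i<N. Poly_Mapping.lookup m i * B ^ i)"

lemma sum_digits_lt:
  assumes "\<forall>i<N. x i < (B::nat)"
  shows "(\<Sum>i<N. x i * B ^ i) < B ^ N"
  using assms
proof (induction N)
  case 0 then show ?case by simp
next
  case (Suc N)
  have "(\<Sum>i<Suc N. x i * B ^ i) = (\<Sum>i<N. x i * B ^ i) + x N * B ^ N" by simp
  also have "\<dots> < B ^ N + x N * B ^ N" using Suc by simp
  also have "\<dots> = (Suc (x N)) * B ^ N" by simp
  also have "\<dots> \<le> B * B ^ N" using Suc.prems by (intro mult_right_mono) auto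
  finally show ?case by simp
qed

lemma digits_inj:
  assumes "\<forall>i<N. x i < (B::nat)" "\<forall>i<N. y i < B"
    and "(\<Sum>i<N. x i * B ^ i) = (\<Sum>i<N. y i * B ^ i)"
  shows "\<forall>i<N. x i = y i"
  using assms
proof (induction N)
  case 0 then show ?case by simp
next
  case (Suc N)
  define P where "P = B ^ N"
  define S1 where "S1 = (\<Sum>i<N. x i * B ^ i)"
  define S2 where "S2 = (\<Sum>i<N. y i * B ^ i)"
  have l1: "S1 < P" unfolding S1_def P_def by (rule sum_digits_lt) (use Suc.prems in auto)
  have l2: "S2 < P" unfolding S2_def P_def by (rule sum_digits_lt) (use Suc.prems in auto)
  have eq: "S1 + x N * P = S2 + y N * P" using Suc.prems(3) by (simp add: S1_def S2_def P_def)
  have "(S1 + x N * P) div P = x N" using l1 by simp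
  moreover have "(S2 + y N * P) div P = y N" using l2 by simp
  ultimately have xy: "x N = y N" using eq by simp
  then have "S1 = S2" using eq by simp
  moreover have "\<forall>i<N. x i < B" "\<forall>i<N. y i < B" using Suc.prems by auto
  ultimately have "\<forall>i<N. x i = y i" using Suc.IH unfolding S1_def S2_def by blast
  with xy show ?case by (auto simp: less_Suc_eq)
qed

definition kv :: "nat \<Rightarrow> nat \<Rightarrow> int poly" where
  "kv B i = monom 1 (B ^ i)"

lemma mon_kv: "mon {..<N} (kv B) m = monom 1 (code N B m)"
proof -
  have "mon {..<N} (kv B) m = (\<Prod>i<N. monom 1 (Poly_Mapping.lookup m i * B ^ i))"
    unfolding mon_def kv_def by (simp add: monom_power mult.commute)
  also have "\<dots> = monom 1 (code N B m)"
    unfolding code_def by (induction N) (simp_all add: mult_monom)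
  finally show ?thesis .
qed

lemma code_inj:
  assumes "m \<in> Sset {..<N} D" "m' \<in> Sset {..<N} D" "D < B" "code N B m = code N B m'"
  shows "m = m'"
proof -
  have b: "\<forall>i<N. Poly_Mapping.lookup m i < B" "\<forall>i<N. Poly_Mapping.lookup m' i < B"
    using assms(1,2,3) lookup_le_mdeg unfolding Sset_def by (metis (no_types, lifting) le_less_trans mem_Collect_eq order_trans)+
  have e: "\<forall>i<N. Poly_Mapping.lookup m i = Poly_Mapping.lookup m' i"
    by (rule digits_inj[OF b]) (use assms(4) in \<open>simp add: code_def\<close>)
  show ?thesis
  proof (rule poly_mapping_eqI)
    fix k show "Poly_Mapping.lookup m k = Poly_Mapping.lookup m' k"
    proof (cases "k < N")
      case True then show ?thesis using e by simp
    next
      case False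
      then have "k \<notin> Poly_Mapping.keys m" "k \<notin> Poly_Mapping.keys m'" using assms(1,2) by (auto simp: Sset_def)
      then show ?thesis by (simp add: in_keys_iff)
    qed
  qed
qed

lemma of_int_monom_mult: "of_int c * monom (1::'a::comm_ring_1) n = monom (of_int c) n"
  by (simp add: of_int_monom mult_monom)

lemma kron_coeff:
  assumes f: "bnd f D" and DB: "D < B" and mu: "f \<mu> \<noteq> 0" and kmu: "Poly_Mapping.keys \<mu> \<subseteq> {..<N}"
  shows "coeff (ev {..<N} D (kv B) f) (code N B \<mu>) = f \<mu>"
proof -
  let ?S = "Sset {..<N} D"
  have muS: "\<mu> \<in> ?S" using f mu kmu by (auto simp: Sset_def bnd_def)
  have "coeff (ev {..<N} D (kv B) f) (code N B \<mu>) =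
        (\<Sum>m\<in>?S. of_int (f m) * (if code N B m = code N B \<mu> then 1 else 0))"
    unfolding ev_def mon_kv coeff_sum
    by (rule sum.cong) (auto simp: of_int_monom_mult)
  also have "\<dots> = (\<Sum>m\<in>?S. if m = \<mu> then f \<mu> else 0)"
    by (rule sum.cong) (use code_inj[OF _ muS DB] in auto)
  also have "\<dots> = f \<mu>" using muS finite_Sset[of "{..<N}" D] by simp
  finally show ?thesis .
qed

lemma ev_zero[simp]: "ev V D v (\<lambda>_. 0) = 0"
  unfolding ev_def by simp

lemma mon_zero[simp]: "mon V v 0 = 1"
  unfolding mon_def by simp

lemma bnd_kone: "bnd kone 0"
  unfolding bnd_def kone_def by simp

lemma ev_kone: assumes "finite V" shows "ev V D v kone = 1"
proof -
  have "ev V D v kone = (\<Sum>m\<in>Sset V D. if m = 0 then 1 else 0)"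
    unfolding ev_def kone_def by (rule sum.cong) auto
  also have "\<dots> = 1" using finite_Sset[OF assms, of D] by (simp add: Sset_def)
  finally show ?thesis .
qed

lemma keys_bounded: "\<exists>N. Poly_Mapping.keys (m::monom) \<subseteq> {..<N}"
  using finite_nat_bounded[of "Poly_Mapping.keys m"] by simp

lemma keys_bounded2: "\<exists>N. Poly_Mapping.keys (m::monom) \<subseteq> {..<N} \<and> Poly_Mapping.keys (m'::monom) \<subseteq> {..<N}"
  using finite_nat_bounded[of "Poly_Mapping.keys m \<union> Poly_Mapping.keys m'"] by simp

lemma K_domain:
  assumes "f \<in> K" "g \<in> K" "f \<noteq> (\<lambda>_. 0)" "g \<noteq> (\<lambda>_. 0)"
  shows "kmult f g \<noteq> (\<lambda>_. 0)"
proof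
  assume fg: "kmult f g = (\<lambda>_. 0)"
  obtain D1 D2 where f: "bnd f D1" and g: "bnd g D2" using assms K_bnd by blast
  obtain \<mu> where mu: "f \<mu> \<noteq> 0" using assms(3) by auto
  obtain \<nu> where nu: "g \<nu> \<noteq> 0" using assms(4) by auto
  obtain N where N: "Poly_Mapping.keys \<mu> \<subseteq> {..<N}" "Poly_Mapping.keys \<nu> \<subseteq> {..<N}"
    using keys_bounded2 by blast
  define B where "B = Suc (D1 + D2)"
  have "coeff (ev {..<N} D1 (kv B) f) (code N B \<mu>) = f \<mu>"
    by (rule kron_coeff[OF f _ mu N(1)]) (simp add: B_def)
  then have p: "ev {..<N} D1 (kv B) f \<noteq> 0" using mu by auto
  have "coeff (ev {..<N} D2 (kv B) g) (code N B \<nu>) = g \<nu>"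
    by (rule kron_coeff[OF g _ nu N(2)]) (simp add: B_def)
  then have q: "ev {..<N} D2 (kv B) g \<noteq> 0" using nu by auto
  have "ev {..<N} (D1 + D2) (kv B) (kmult f g) = ev {..<N} D1 (kv B) f * ev {..<N} D2 (kv B) g"
    by (rule ev_mult[OF _ f g]) simp
  then show False using p q fg by simp
qed

definition pm1 :: "series \<Rightarrow> bool" where
  "pm1 f \<longleftrightarrow> f = kone \<or> f = (\<lambda>m. - kone m)"

lemma Lset_0: "Lset 0 = {0}"
  by (auto simp: Lset_iff intro!: poly_mapping_eqI)

lemma kmult_at_0: "kmult f g 0 = f 0 * g 0"
  unfolding kmult_Lset Lset_0 by simp

lemma units_const:
  assumes "f \<in> K" "g \<in> K" "kmult f g = kone" "m \<noteq> 0"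
  shows "f m = 0"
proof (rule ccontr)
  assume mu: "f m \<noteq> 0"
  obtain D1 D2 where f: "bnd f D1" and g: "bnd g D2" using assms K_bnd by blast
  obtain N where N: "Poly_Mapping.keys m \<subseteq> {..<N}" using keys_bounded by blast
  define B where "B = Suc (D1 + D2)"
  define p where "p = ev {..<N} D1 (kv B) f"
  define q where "q = ev {..<N} D2 (kv B) g"
  have c: "coeff p (code N B m) = f m"
    unfolding p_def by (rule kron_coeff[OF f _ mu N]) (simp add: B_def)
  have "p * q = ev {..<N} (D1 + D2) (kv B) (kmult f g)"
    unfolding p_def q_def by (rule ev_mult[OF _ f g, symmetric]) simp
  also have "\<dots> = 1" using assms(3) by (simp add: ev_kone)
  finally have pq: "p * q = 1" .
  then have "p \<noteq> 0" "q \<noteq> 0" by auto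
  then have "degree p + degree q = 0" using degree_mult_eq[of p q] pq by simp
  then have "degree p = 0" by simp
  moreover have "code N B m \<le> degree p" using c mu by (intro le_degree) simp
  ultimately have c0: "code N B m = 0" by simp
  have "\<forall>i<N. Poly_Mapping.lookup m i = 0"
  proof (intro allI impI)
    fix i assume "i < N"
    then have "Poly_Mapping.lookup m i * B ^ i \<le> code N B m"
      unfolding code_def by (intro member_le_sum) auto
    then show "Poly_Mapping.lookup m i = 0" using c0 by (simp add: B_def)
  qed
  then have "m = 0" using N by (intro poly_mapping_eqI) (auto simp: in_keys_iff)
  with assms(4) show False by simp
qed

lemma units_pm1:
  assumes "f \<in> K" "g \<in> K" "kmult f g = kone"
  shows "pm1 f"
proof -
  have z: "f m = 0" if "m \<noteq> 0" for m using units_const[OF assms that] .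
  have zg: "g m = 0" if "m \<noteq> 0" for m
    using units_const[OF assms(2,1) _ that] assms(3) kmult_commute by metis
  have "f 0 * g 0 = 1" using kmult_at_0[of f g] assms(3) by (simp add: kone_def)
  then have "f 0 = 1 \<or> f 0 = -1" using zmult_eq_1_iff by blast
  then show ?thesis
  proof
    assume "f 0 = 1" then have "f = kone" unfolding kone_def using z by (intro ext) auto
    then show ?thesis by (simp add: pm1_def)
  next
    assume "f 0 = -1" then have "f = (\<lambda>m. - kone m)" unfolding kone_def using z by (intro ext) auto
    then show ?thesis by (simp add: pm1_def)
  qed
qed

lemma kmult_kone_left: "kmult kone h = h"
proof (rule ext)
  fix m
  have "kmult kone h m = (\<Sum>a\<in>Lset m. if a = 0 then h (m - a) else 0)"
    unfolding kmult_Lset kone_def by (rule sum.cong) auto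
  also have "\<dots> = h m" using finite_Lset[of m] by (simp add: Lset_iff)
  finally show "kmult kone h m = h m" .
qed

lemma kmult_mkone_left: "kmult (\<lambda>m. - kone m) h = (\<lambda>m. - h m)"
proof (rule ext)
  fix m
  have "kmult (\<lambda>m. - kone m) h m = - kmult kone h m"
    unfolding kmult_Lset by (simp add: sum_negf)
  then show "kmult (\<lambda>m. - kone m) h m = - h m" by (simp add: kmult_kone_left)
qed

lemma kone_K: "kone \<in> K" using bnd_kone K_bnd by blast
lemma mkone_K: "(\<lambda>m. - kone m) \<in> K" unfolding K_def kone_def by auto

lemma pm1_K: "pm1 f \<Longrightarrow> f \<in> K" using kone_K mkone_K unfolding pm1_def by auto

lemma pm1_unit:
  assumes "pm1 f" "f \<in> R" shows "unit_in R f"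
  using assms(1) unfolding pm1_def
proof
  assume "f = kone" then show ?thesis using assms(2) unfolding unit_in_def
    by (auto simp: kmult_kone_left intro!: bexI[of _ kone])
next
  assume "f = (\<lambda>m. - kone m)" then show ?thesis using assms(2) unfolding unit_in_def
    by (auto simp: kmult_mkone_left intro!: bexI[of _ "\<lambda>m. - kone m"])
qed

lemma unit_pm1: "unit_in K f \<Longrightarrow> pm1 f"
  unfolding unit_in_def using units_pm1 by blast



definition Mj :: "nat list \<Rightarrow> nat \<Rightarrow> series" where
  "Mj \<beta> j = (\<lambda>m. if compress m = \<beta> \<and> Poly_Mapping.keys m \<subseteq> {j..} then 1 else 0)"

lemma M_Mj: "M \<alpha> = Mj \<alpha> 0"
  unfolding monomialQ_def Mj_def by auto

lemma compress_nil_iff: "compress m = [] \<longleftrightarrow> m = 0"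
  unfolding compress_def by simp

lemma mdeg_compress: "mdeg m = sum_list (compress m)"
  unfolding compress_def mdeg_def
  by (simp add: sum_list_distinct_conv_sum_set)

lemma compress_pos: "x \<in> set (compress m) \<Longrightarrow> 0 < x"
  unfolding compress_def by (auto simp: in_keys_iff)

lemma bnd_Mj: "bnd (Mj \<beta> j) (sum_list \<beta>)"
  unfolding bnd_def Mj_def by (auto simp: mdeg_compress split: if_splits)

lemma Mj_K: "Mj \<beta> j \<in> K" using bnd_Mj K_bnd by blast

lemma lookup_single_add:
  "Poly_Mapping.lookup (Poly_Mapping.single j c + m') i = (if i = j then c + Poly_Mapping.lookup m' i else Poly_Mapping.lookup m' i)"
  by (simp add: lookup_add lookup_single when_def)

lemma keys_single_add:
  assumes "c > 0"
  shows "Poly_Mapping.keys (Poly_Mapping.single j c + (m'::monom)) = insert j (Poly_Mapping.keys m')"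
  using assms by (auto simp: in_keys_iff lookup_single_add split: if_splits)

lemma compress_cons:
  assumes "j \<notin> Poly_Mapping.keys m'" "\<forall>i\<in>Poly_Mapping.keys m'. j < i" "c > 0"
  shows "compress (Poly_Mapping.single j c + m') = c # compress m'"
proof -
  let ?m = "Poly_Mapping.single j c + m'"
  have k: "Poly_Mapping.keys ?m = insert j (Poly_Mapping.keys m')" using keys_single_add[OF assms(3)] .
  have mn: "Min (insert j (Poly_Mapping.keys m')) = j"
    using assms(2) by (intro Min_eqI) (auto intro: less_imp_le)
  have s: "sorted_list_of_set (insert j (Poly_Mapping.keys m')) = j # sorted_list_of_set (Poly_Mapping.keys m')"
    using sorted_list_of_set_nonempty[of "insert j (Poly_Mapping.keys m')"] mn assms(1) by simp
  have j0: "Poly_Mapping.lookup m' j = 0" using assms(1) by (simp add: in_keys_iff)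
  have "map (Poly_Mapping.lookup ?m) (sorted_list_of_set (Poly_Mapping.keys m')) =
        map (Poly_Mapping.lookup m') (sorted_list_of_set (Poly_Mapping.keys m'))"
    by (rule map_cong) (use assms(1) in \<open>auto simp: lookup_single_add\<close>)
  then show ?thesis unfolding compress_def k s using j0 by (simp add: lookup_single_add)
qed

lemma decomp_single:
  "(m::monom) = Poly_Mapping.single j (Poly_Mapping.lookup m j) + (m - Poly_Mapping.single j (Poly_Mapping.lookup m j))"
  by (rule poly_mapping_eqI) (simp add: lookup_single_add lookup_minus lookup_single when_def)

lemma keys_minus_single:
  "Poly_Mapping.keys ((m::monom) - Poly_Mapping.single j (Poly_Mapping.lookup m j)) = Poly_Mapping.keys m - {j}"
  by (auto simp: in_keys_iff lookup_minus lookup_single when_def split: if_splits)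

definition Ev :: "(nat \<Rightarrow> 'a::comm_ring_1) \<Rightarrow> nat \<Rightarrow> nat \<Rightarrow> nat list \<Rightarrow> 'a" where
  "Ev v j L \<beta> = (\<Sum>m\<in>{m. Poly_Mapping.keys m \<subseteq> {j..<j+L} \<and> compress m = \<beta>}. \<Prod>i\<in>{j..<j+L}. v i ^ Poly_Mapping.lookup m i)"

lemma finite_compress_set: "finite {m. Poly_Mapping.keys m \<subseteq> {j..<j+L} \<and> compress m = \<beta>}"
proof (rule finite_subset)
  show "{m. Poly_Mapping.keys m \<subseteq> {j..<j+L} \<and> compress m = \<beta>} \<subseteq> Sset {j..<j+L} (sum_list \<beta>)"
    by (auto simp: Sset_def mdeg_compress)
  show "finite (Sset {j..<j+L} (sum_list \<beta>))" by (rule finite_Sset) simp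
qed

lemma Ev_nil: "Ev v j L [] = 1"
proof -
  have "{m. Poly_Mapping.keys m \<subseteq> {j..<j+L} \<and> compress m = []} = {0}"
    by (auto simp: compress_nil_iff)
  then show ?thesis unfolding Ev_def by simp
qed

lemma Ev_zero: "Ev v j 0 (b # \<beta>) = 0"
proof -
  have "{m. Poly_Mapping.keys m \<subseteq> {j..<j+0} \<and> compress m = b # \<beta>} = {}"
  proof (rule equals0I)
    fix m assume "m \<in> {m. Poly_Mapping.keys m \<subseteq> {j..<j+0} \<and> compress m = b # \<beta>}"
    then have "Poly_Mapping.keys m = {}" "compress m = b # \<beta>" by auto
    then show False using compress_nil_iff[of m] by simp
  qed
  then show ?thesis unfolding Ev_def by (metis sum.empty)
qed

lemma Ev_rec:
  assumes b: "b > 0"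
  shows "Ev v j (Suc L) (b # \<beta>) = v j ^ b * Ev v (Suc j) L \<beta> + Ev v (Suc j) L (b # \<beta>)"
proof -
  define W where "W = {Suc j..<Suc j + L}"
  have WW: "{j..<j + Suc L} = insert j W" unfolding W_def by auto
  have jW: "j \<notin> W" unfolding W_def by auto
  define A where "A = {m. Poly_Mapping.keys m \<subseteq> {j..<j + Suc L} \<and> compress m = b # \<beta>}"
  define A0 where "A0 = {m. Poly_Mapping.keys m \<subseteq> W \<and> compress m = b # \<beta>}"
  define A1 where "A1 = {m. Poly_Mapping.keys m \<subseteq> W \<and> compress m = \<beta>}"
  define sh where "sh = (\<lambda>m'::monom. Poly_Mapping.single j b + m')"
  define F where "F = (\<lambda>m. \<Prod>i\<in>insert j W. v i ^ Poly_Mapping.lookup m i)"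
  have cons_sh: "compress (sh m') = b # compress m'" and keys_sh: "Poly_Mapping.keys (sh m') = insert j (Poly_Mapping.keys m')"
    if "m' \<in> A1" for m'
  proof -
    have "Poly_Mapping.keys m' \<subseteq> W" using that by (simp add: A1_def W_def)
    then have "j \<notin> Poly_Mapping.keys m'" "\<forall>i\<in>Poly_Mapping.keys m'. j < i" using jW by (auto simp: W_def)
    then show "compress (sh m') = b # compress m'" unfolding sh_def using compress_cons b by blast
    show "Poly_Mapping.keys (sh m') = insert j (Poly_Mapping.keys m')" unfolding sh_def using keys_single_add b by blast
  qed
  have Aeq: "A = A0 \<union> sh ` A1"
  proof
    show "A \<subseteq> A0 \<union> sh ` A1"
    proof
      fix m assume m: "m \<in> A"
      show "m \<in> A0 \<union> sh ` A1"
      proof (cases "j \<in> Poly_Mapping.keys m")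
        case False
        have "Poly_Mapping.keys m \<subseteq> {j..<j + Suc L}" using m by (simp add: A_def)
        then have "Poly_Mapping.keys m \<subseteq> {Suc j..<Suc j + L}" using False
          by (auto simp: subset_iff) (metis Suc_leI atLeastLessThan_iff le_neq_implies_less)+
        then have "m \<in> A0" using m by (auto simp: A_def A0_def W_def)
        then show ?thesis by simp
      next
        case True
        define c where "c = Poly_Mapping.lookup m j"
        define m' where "m' = m - Poly_Mapping.single j c"
        have c0: "c > 0" using True by (simp add: c_def in_keys_iff)
        have mm: "m = Poly_Mapping.single j c + m'" unfolding m'_def c_def by (rule decomp_single)
        have km': "Poly_Mapping.keys m' = Poly_Mapping.keys m - {j}" unfolding m'_def c_def by (rule keys_minus_single)
        have ksub: "Poly_Mapping.keys m' \<subseteq> W" using m km' WW by (auto simp: A_def)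
        then have "j \<notin> Poly_Mapping.keys m'" "\<forall>i\<in>Poly_Mapping.keys m'. j < i" using jW by (auto simp: W_def)
        then have "compress m = c # compress m'" using mm compress_cons c0 by metis
        then have "c = b" "compress m' = \<beta>" using m by (auto simp: A_def)
        then have "m' \<in> A1" "m = sh m'" using ksub mm by (auto simp: A1_def W_def sh_def)
        then show ?thesis by blast
      qed
    qed
    show "A0 \<union> sh ` A1 \<subseteq> A"
    proof
      fix m assume "m \<in> A0 \<union> sh ` A1"
      then show "m \<in> A"
      proof
        assume "m \<in> A0" then show ?thesis by (auto simp: A0_def A_def W_def)
      next
        assume "m \<in> sh ` A1"
        then obtain m' where m': "m' \<in> A1" "m = sh m'" by blast
        then show ?thesis using cons_sh[OF m'(1)] keys_sh[OF m'(1)] WW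
          by (auto simp: A_def A1_def W_def)
      qed
    qed
  qed
  have disj: "A0 \<inter> sh ` A1 = {}"
  proof -
    have "j \<in> Poly_Mapping.keys m" if "m \<in> sh ` A1" for m using that keys_sh by auto
    moreover have "j \<notin> Poly_Mapping.keys m" if "m \<in> A0" for m using that jW by (auto simp: A0_def)
    ultimately show ?thesis by blast
  qed
  have fA0: "finite A0" unfolding A0_def W_def by (rule finite_compress_set)
  have fA1: "finite A1" unfolding A1_def W_def by (rule finite_compress_set)
  have inj: "inj_on sh A1" unfolding sh_def by (rule inj_onI) simp
  have "Ev v j (Suc L) (b # \<beta>) = sum F A" unfolding Ev_def A_def F_def WW ..
  also have "\<dots> = sum F A0 + sum F (sh ` A1)" unfolding Aeq
    by (rule sum.union_disjoint) (use fA0 fA1 disj in auto)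
  also have "sum F (sh ` A1) = sum (F \<circ> sh) A1" by (rule sum.reindex[OF inj])
  also have "sum F A0 = Ev v (Suc j) L (b # \<beta>)"
    unfolding Ev_def W_def[symmetric] A0_def[symmetric]
  proof (rule sum.cong[OF refl])
    fix m assume "m \<in> A0"
    then have "Poly_Mapping.lookup m j = 0" using jW by (auto simp: A0_def in_keys_iff)
    then show "F m = (\<Prod>i\<in>W. v i ^ Poly_Mapping.lookup m i)"
      unfolding F_def using jW by (simp add: W_def)
  qed
  also have "sum (F \<circ> sh) A1 = v j ^ b * Ev v (Suc j) L \<beta>"
    unfolding Ev_def W_def[symmetric] A1_def[symmetric] sum_distrib_left
  proof (rule sum.cong[OF refl])
    fix m' assume "m' \<in> A1"
    then have "Poly_Mapping.keys m' \<subseteq> W" by (simp add: A1_def W_def)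
    then have j0: "Poly_Mapping.lookup m' j = 0" using jW by (auto simp: in_keys_iff)
    have "(F \<circ> sh) m' = v j ^ b * (\<Prod>i\<in>W. v i ^ Poly_Mapping.lookup (sh m') i)"
      unfolding F_def using jW j0 by (simp add: W_def sh_def lookup_single_add)
    also have "(\<Prod>i\<in>W. v i ^ Poly_Mapping.lookup (sh m') i) = (\<Prod>i\<in>W. v i ^ Poly_Mapping.lookup m' i)"
      by (rule prod.cong[OF refl]) (use jW in \<open>auto simp: sh_def lookup_single_add\<close>)
    finally show "(F \<circ> sh) m' = v j ^ b * (\<Prod>i\<in>W. v i ^ Poly_Mapping.lookup m' i)" .
  qed
  finally show ?thesis by (simp add: add.commute)
qed

lemma Ev_cong:
  assumes "\<forall>i\<in>{j..<j+L}. v i = w i"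
  shows "Ev v j L \<beta> = Ev w j L \<beta>"
  unfolding Ev_def by (rule sum.cong[OF refl], rule prod.cong[OF refl]) (use assms in auto)

lemma Ev_ones:
  assumes "\<forall>i\<in>{j..<j+L}. v i = 1" "\<forall>x\<in>set \<beta>. x > 0"
  shows "Ev v j L \<beta> = of_nat (L choose length \<beta>)"
  using assms
proof (induction L arbitrary: j \<beta>)
  case 0
  then show ?case by (cases \<beta>) (simp_all add: Ev_nil Ev_zero)
next
  case (Suc L)
  show ?case
  proof (cases \<beta>)
    case Nil then show ?thesis by (simp add: Ev_nil)
  next
    case (Cons b \<gamma>)
    have b: "b > 0" using Suc.prems Cons by simp
    have v1: "\<forall>i\<in>{Suc j..<Suc j+L}. v i = 1" using Suc.prems by auto
    have "Ev v j (Suc L) \<beta> = v j ^ b * Ev v (Suc j) L \<gamma> + Ev v (Suc j) L (b # \<gamma>)"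
      unfolding Cons by (rule Ev_rec[OF b])
    also have "\<dots> = of_nat (L choose length \<gamma>) + of_nat (L choose Suc (length \<gamma>))"
      using Suc.IH[OF v1] Suc.prems Cons by simp
    also have "\<dots> = of_nat (Suc L choose length \<beta>)" using Cons by simp
    finally show ?thesis .
  qed
qed

lemma ev_Mj:
  assumes "sum_list \<beta> \<le> D"
  shows "ev {j..<j+L} D v (Mj \<beta> j) = Ev v j L \<beta>"
proof -
  let ?S = "Sset {j..<j+L} D"
  have "ev {j..<j+L} D v (Mj \<beta> j) = (\<Sum>m\<in>?S. if compress m = \<beta> then mon {j..<j+L} v m else 0)"
    unfolding ev_def Mj_def by (rule sum.cong) (auto simp: Sset_def)
  also have "\<dots> = (\<Sum>m\<in>{m\<in>?S. compress m = \<beta>}. mon {j..<j+L} v m)"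
    by (rule sum.inter_filter[symmetric]) (simp add: finite_Sset)
  also have "{m\<in>?S. compress m = \<beta>} = {m. Poly_Mapping.keys m \<subseteq> {j..<j+L} \<and> compress m = \<beta>}"
    using assms by (auto simp: Sset_def mdeg_compress)
  finally show ?thesis unfolding Ev_def mon_def .
qed



section \<open>Slicing by the exponent of one variable\<close>

definition slice :: "nat \<Rightarrow> nat \<Rightarrow> series \<Rightarrow> series" where
  "slice s r f = (\<lambda>m. if Poly_Mapping.lookup m s = 0 then f (m + Poly_Mapping.single s r) else 0)"

definition xdeg_le :: "nat \<Rightarrow> series \<Rightarrow> nat \<Rightarrow> bool" where
  "xdeg_le s f d \<longleftrightarrow> (\<forall>m. f m \<noteq> 0 \<longrightarrow> Poly_Mapping.lookup m s \<le> d)"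

lemma bnd_slice: "bnd f D \<Longrightarrow> bnd (slice s r f) D"
  unfolding bnd_def slice_def
  by (auto split: if_splits) (metis le_add1 mdeg_add order_trans)

lemma slice_K: "f \<in> K \<Longrightarrow> slice s r f \<in> K"
  using bnd_slice K_bnd by blast

lemma bnd_xdeg: "bnd f D \<Longrightarrow> xdeg_le s f D"
  unfolding bnd_def xdeg_le_def using lookup_le_mdeg order_trans by blast

lemma xdeg_kmult:
  assumes "xdeg_le s f d" "xdeg_le s g e"
  shows "xdeg_le s (kmult f g) (d + e)"
  unfolding xdeg_le_def
proof (intro allI impI)
  fix m assume "kmult f g m \<noteq> 0"
  then obtain a where a: "a \<in> Lset m" "f a \<noteq> 0" "g (m - a) \<noteq> 0"
    using kmult_nonzero_ex by blast
  have "Poly_Mapping.lookup m s = Poly_Mapping.lookup a s + Poly_Mapping.lookup (m - a) s"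
    using a(1) by (simp add: Lset_iff lookup_minus)
  then show "Poly_Mapping.lookup m s \<le> d + e"
    using a assms unfolding xdeg_le_def by (metis add_le_mono)
qed

lemma slice_nonzero_le:
  assumes "xdeg_le s f d" "slice s r f \<noteq> (\<lambda>_. 0)"
  shows "r \<le> d"
proof -
  obtain m where "slice s r f m \<noteq> 0" using assms(2) by auto
  then have "f (m + Poly_Mapping.single s r) \<noteq> 0" "Poly_Mapping.lookup m s = 0"
    unfolding slice_def by (auto split: if_splits)
  then show ?thesis using assms(1) unfolding xdeg_le_def
    by (metis add_0 lookup_add lookup_single_eq)
qed

lemma exact_xdeg:
  assumes "f \<in> K" "f \<noteq> (\<lambda>_. 0)"
  shows "\<exists>d. xdeg_le s f d \<and> slice s d f \<noteq> (\<lambda>_. 0)"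
proof -
  obtain D where "bnd f D" using assms K_bnd by blast
  then have ex: "xdeg_le s f D" by (rule bnd_xdeg)
  define d where "d = (LEAST d. xdeg_le s f d)"
  have d: "xdeg_le s f d" unfolding d_def by (rule LeastI[of "\<lambda>d. xdeg_le s f d", OF ex])
  have "\<exists>m0. f m0 \<noteq> 0 \<and> Poly_Mapping.lookup m0 s = d"
  proof (cases d)
    case 0
    obtain m where "f m \<noteq> 0" using assms(2) by auto
    then show ?thesis using d 0 unfolding xdeg_le_def by auto
  next
    case (Suc d')
    have "\<not> xdeg_le s f d'"
    proof
      assume "xdeg_le s f d'"
      then have "d \<le> d'" unfolding d_def by (rule Least_le)
      then show False using Suc by simp
    qed
    then obtain m where "f m \<noteq> 0" "Poly_Mapping.lookup m s > d'" unfolding xdeg_le_def by auto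
    then show ?thesis using d Suc unfolding xdeg_le_def by (metis Suc_leI le_antisym)
  qed
  then obtain m0 where m0: "f m0 \<noteq> 0" "Poly_Mapping.lookup m0 s = d" by blast
  define m' where "m' = m0 - Poly_Mapping.single s d"
  have "m0 = Poly_Mapping.single s d + m'" unfolding m'_def using decomp_single[of m0 s] m0 by simp
  moreover have "Poly_Mapping.lookup m' s = 0" unfolding m'_def by (simp add: lookup_minus m0)
  ultimately have "slice s d f m' = f m0" unfolding slice_def by (simp add: add.commute)
  then have "slice s d f \<noteq> (\<lambda>_. 0)" using m0 by (metis)
  then show ?thesis using d by blast
qed

lemma slice_kmult_top:
  assumes f: "xdeg_le s f d" and g: "xdeg_le s g e"
  shows "slice s (d + e) (kmult f g) = kmult (slice s d f) (slice s e g)"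
proof (rule ext)
  fix m
  show "slice s (d + e) (kmult f g) m = kmult (slice s d f) (slice s e g) m"
  proof (cases "Poly_Mapping.lookup m s = 0")
    case False
    have "kmult (slice s d f) (slice s e g) m = 0"
      unfolding kmult_Lset
    proof (rule sum.neutral, intro ballI)
      fix a assume a: "a \<in> Lset m"
      show "slice s d f a * slice s e g (m - a) = 0"
      proof (cases "Poly_Mapping.lookup a s = 0")
        case True
        then have "Poly_Mapping.lookup (m - a) s \<noteq> 0" using False by (simp add: lookup_minus)
        then show ?thesis by (simp add: slice_def)
      next
        case False then show ?thesis by (simp add: slice_def)
      qed
    qed
    then show ?thesis using False by (simp add: slice_def)
  next
    case True
    define Mm where "Mm = m + Poly_Mapping.single s (d + e)"
    define T where "T = {a \<in> Lset Mm. Poly_Mapping.lookup a s = d}"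
    have Ms: "Poly_Mapping.lookup Mm s = d + e" unfolding Mm_def using True by (simp add: lookup_add)
    have "slice s (d + e) (kmult f g) m = (\<Sum>a\<in>Lset Mm. f a * g (Mm - a))"
      using True by (simp add: slice_def kmult_Lset Mm_def)
    also have "\<dots> = (\<Sum>a\<in>T. f a * g (Mm - a))"
    proof (rule sum.mono_neutral_right)
      show "finite (Lset Mm)" by (rule finite_Lset)
      show "T \<subseteq> Lset Mm" unfolding T_def by auto
      show "\<forall>a\<in>Lset Mm - T. f a * g (Mm - a) = 0"
      proof
        fix a assume a: "a \<in> Lset Mm - T"
        then have ne: "Poly_Mapping.lookup a s \<noteq> d" and le: "Poly_Mapping.lookup a s \<le> d + e"
          using Ms by (auto simp: T_def Lset_iff) (metis)
        show "f a * g (Mm - a) = 0"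
        proof (cases "Poly_Mapping.lookup a s > d")
          case True then have "f a = 0" using f unfolding xdeg_le_def by (meson leD)
          then show ?thesis by simp
        next
          case False
          then have "Poly_Mapping.lookup (Mm - a) s > e" using ne Ms le by (simp add: lookup_minus)
          then have "g (Mm - a) = 0" using g unfolding xdeg_le_def by (meson leD)
          then show ?thesis by simp
        qed
      qed
    qed
    also have "\<dots> = (\<Sum>a'\<in>Lset m. slice s d f a' * slice s e g (m - a'))"
    proof (rule sum.reindex_bij_witness[where i="\<lambda>a'. a' + Poly_Mapping.single s d"
                                         and j="\<lambda>a. a - Poly_Mapping.single s d"])
      fix a assume a: "a \<in> T"
      then have aM: "\<forall>i. Poly_Mapping.lookup a i \<le> Poly_Mapping.lookup Mm i" and as: "Poly_Mapping.lookup a s = d"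
        by (auto simp: T_def Lset_iff)
      show "a - Poly_Mapping.single s d + Poly_Mapping.single s d = a"
        by (rule poly_mapping_eqI) (auto simp: lookup_add lookup_minus lookup_single when_def as)
      have "\<forall>i. Poly_Mapping.lookup (a - Poly_Mapping.single s d) i \<le> Poly_Mapping.lookup m i"
      proof
        fix i show "Poly_Mapping.lookup (a - Poly_Mapping.single s d) i \<le> Poly_Mapping.lookup m i"
          using aM[rule_format, of i] as True
          by (cases "i = s") (auto simp: lookup_add lookup_minus lookup_single when_def Mm_def)
      qed
      then show "a - Poly_Mapping.single s d \<in> Lset m" by (simp add: Lset_iff)
      have l0: "Poly_Mapping.lookup (a - Poly_Mapping.single s d) s = 0" by (simp add: lookup_minus as)
      have l1: "Poly_Mapping.lookup (m - (a - Poly_Mapping.single s d)) s = 0" by (simp add: lookup_minus True)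
      have e1: "a - Poly_Mapping.single s d + Poly_Mapping.single s d = a"
        by (rule poly_mapping_eqI) (auto simp: lookup_add lookup_minus lookup_single when_def as)
      have e2: "m - (a - Poly_Mapping.single s d) + Poly_Mapping.single s e = Mm - a"
      proof (rule poly_mapping_eqI)
        fix i show "Poly_Mapping.lookup (m - (a - Poly_Mapping.single s d) + Poly_Mapping.single s e) i = Poly_Mapping.lookup (Mm - a) i"
          using aM[rule_format, of i] as True
          by (cases "i = s") (auto simp: lookup_add lookup_minus lookup_single when_def Mm_def)
      qed
      show "slice s d f (a - Poly_Mapping.single s d) * slice s e g (m - (a - Poly_Mapping.single s d)) = f a * g (Mm - a)"
        unfolding slice_def using l0 l1 e1 e2 by simp
    next
      fix a' assume a': "a' \<in> Lset m"
      then have am: "\<forall>i. Poly_Mapping.lookup a' i \<le> Poly_Mapping.lookup m i" by (simp add: Lset_iff)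
      show "a' + Poly_Mapping.single s d - Poly_Mapping.single s d = a'"
        by (rule poly_mapping_eqI) (simp add: lookup_add lookup_minus)
      have "\<forall>i. Poly_Mapping.lookup (a' + Poly_Mapping.single s d) i \<le> Poly_Mapping.lookup Mm i"
      proof
        fix i show "Poly_Mapping.lookup (a' + Poly_Mapping.single s d) i \<le> Poly_Mapping.lookup Mm i"
          using am[rule_format, of i] True
          by (cases "i = s") (auto simp: lookup_add lookup_single when_def Mm_def)
      qed
      moreover have "Poly_Mapping.lookup (a' + Poly_Mapping.single s d) s = d"
        using am[rule_format, of s] True by (simp add: lookup_add)
      ultimately show "a' + Poly_Mapping.single s d \<in> T" by (simp add: T_def Lset_iff)
    qed
    also have "\<dots> = kmult (slice s d f) (slice s e g) m" by (simp add: kmult_Lset)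
    finally show ?thesis .
  qed
qed

lemma keys_ge_notin: "Poly_Mapping.keys m \<subseteq> {Suc s..} \<Longrightarrow> s \<notin> Poly_Mapping.keys m \<and> (\<forall>i\<in>Poly_Mapping.keys m. s < i)"
  by auto

lemma slice_Mj_top:
  assumes a: "a > 0"
  shows "slice s a (Mj (a # \<beta>) s) = Mj \<beta> (Suc s)"
proof (rule ext)
  fix m
  show "slice s a (Mj (a # \<beta>) s) m = Mj \<beta> (Suc s) m"
  proof (cases "Poly_Mapping.lookup m s = 0")
    case False
    then have "s \<in> Poly_Mapping.keys m" by (simp add: in_keys_iff)
    then have "\<not> Poly_Mapping.keys m \<subseteq> {Suc s..}" by auto
    then show ?thesis using False by (simp add: slice_def Mj_def)
  next
    case True
    have ks: "Poly_Mapping.keys (Poly_Mapping.single s a + m) = insert s (Poly_Mapping.keys m)"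
      by (rule keys_single_add[OF a])
    show ?thesis
    proof (cases "Poly_Mapping.keys m \<subseteq> {Suc s..}")
      case True2: True
      then have c: "compress (Poly_Mapping.single s a + m) = a # compress m"
        using compress_cons[OF _ _ a] keys_ge_notin by blast
      show ?thesis using True True2 ks c
        by (auto simp: slice_def Mj_def add.commute)
    next
      case False2: False
      then obtain k where k: "k \<in> Poly_Mapping.keys m" "k < Suc s" by (auto simp: subset_iff not_le)
      then have "k \<noteq> s" using True by (auto simp: in_keys_iff)
      then have "k < s" using k by simp
      then have "\<not> Poly_Mapping.keys (Poly_Mapping.single s a + m) \<subseteq> {s..}" using ks k by auto
      then show ?thesis using True False2 by (simp add: slice_def Mj_def add.commute)
    qed
  qed
qed

lemma xdeg_Mj:
  assumes a: "a > 0"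
  shows "xdeg_le s (Mj (a # \<beta>) s) a"
  unfolding xdeg_le_def
proof (intro allI impI)
  fix m assume "Mj (a # \<beta>) s m \<noteq> 0"
  then have m: "compress m = a # \<beta>" "Poly_Mapping.keys m \<subseteq> {s..}" by (auto simp: Mj_def split: if_splits)
  show "Poly_Mapping.lookup m s \<le> a"
  proof (cases "s \<in> Poly_Mapping.keys m")
    case False then show ?thesis by (simp add: in_keys_iff)
  next
    case True
    define c where "c = Poly_Mapping.lookup m s"
    define m' where "m' = m - Poly_Mapping.single s c"
    have c0: "c > 0" using True by (simp add: c_def in_keys_iff)
    have mm: "m = Poly_Mapping.single s c + m'" unfolding m'_def c_def by (rule decomp_single)
    have km': "Poly_Mapping.keys m' = Poly_Mapping.keys m - {s}" unfolding m'_def c_def by (rule keys_minus_single)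
    then have "s \<notin> Poly_Mapping.keys m'" "\<forall>i\<in>Poly_Mapping.keys m'. s < i" using m(2) by auto
    then have "compress m = c # compress m'" using mm compress_cons c0 by metis
    then show ?thesis using m(1) c_def by simp
  qed
qed

lemma slice0_eq:
  assumes "xdeg_le s f 0"
  shows "slice s 0 f = f"
proof (rule ext)
  fix m show "slice s 0 f m = f m"
    using assms unfolding slice_def xdeg_le_def by auto
qed

lemma Mj_nonzero:
  assumes "\<forall>x\<in>set \<beta>. x > 0"
  shows "Mj \<beta> j \<noteq> (\<lambda>_. 0)"
proof
  assume z: "Mj \<beta> j = (\<lambda>_. 0)"
  have "ev {j..<j + length \<beta>} (sum_list \<beta>) (\<lambda>_. 1::int) (Mj \<beta> j) = Ev (\<lambda>_. 1::int) j (length \<beta>) \<beta>"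
    by (rule ev_Mj) simp
  also have "\<dots> = 1" using Ev_ones[of j "length \<beta>" "\<lambda>_. 1::int" \<beta>] assms by simp
  finally show False using z by simp
qed

lemma top_split:
  assumes a: "a > 0" and pos: "\<forall>x\<in>set \<beta>. x > 0"
    and fK: "f \<in> K" and gK: "g \<in> K" and fg: "kmult f g = Mj (a # \<beta>) s"
  shows "\<exists>d e. xdeg_le s f d \<and> xdeg_le s g e \<and> d + e = a \<and>
           kmult (slice s d f) (slice s e g) = Mj \<beta> (Suc s)"
proof -
  have posa: "\<forall>x\<in>set (a # \<beta>). x > 0" using a pos by simp
  have f0: "f \<noteq> (\<lambda>_. 0)"
  proof
    assume "f = (\<lambda>_. 0)" then have "kmult f g = (\<lambda>_. 0)" by (simp add: kmult_zero_left)
    then show False using fg Mj_nonzero[OF posa] by simp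
  qed
  have g0: "g \<noteq> (\<lambda>_. 0)"
  proof
    assume "g = (\<lambda>_. 0)" then have "kmult f g = (\<lambda>_. 0)" by (simp add: kmult_zero_right)
    then show False using fg Mj_nonzero[OF posa] by simp
  qed
  obtain d where d: "xdeg_le s f d" "slice s d f \<noteq> (\<lambda>_. 0)" using exact_xdeg[OF fK f0] by blast
  obtain e where e: "xdeg_le s g e" "slice s e g \<noteq> (\<lambda>_. 0)" using exact_xdeg[OF gK g0] by blast
  have top: "slice s (d + e) (kmult f g) = kmult (slice s d f) (slice s e g)"
    by (rule slice_kmult_top[OF d(1) e(1)])
  have nz: "kmult (slice s d f) (slice s e g) \<noteq> (\<lambda>_. 0)"
    by (rule K_domain[OF slice_K[OF fK] slice_K[OF gK] d(2) e(2)])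
  have le1: "d + e \<le> a"
    by (rule slice_nonzero_le[of s "kmult f g"]) (use fg xdeg_Mj[OF a] top nz in auto)
  have le2: "a \<le> d + e"
    by (rule slice_nonzero_le[OF xdeg_kmult[OF d(1) e(1)]]) (use fg slice_Mj_top[OF a] Mj_nonzero[OF pos] in auto)
  have "d + e = a" using le1 le2 by simp
  moreover have "kmult (slice s d f) (slice s e g) = Mj \<beta> (Suc s)"
    using top fg slice_Mj_top[OF a] \<open>d + e = a\<close> by simp
  ultimately show ?thesis using d(1) e(1) by blast
qed



section \<open>Complex evaluations\<close>

lemma poly_ev: "poly (ev V D v f) z = ev V D (\<lambda>i. poly (v i) z) f"
  unfolding ev_def mon_def by (simp add: poly_sum poly_prod)

lemma prod_monom0: "finite A \<Longrightarrow> (\<Prod>i\<in>A. monom (c i) 0 ^ k i) = monom (\<Prod>i\<in>A. c i ^ k i) 0"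
  by (induction A rule: finite_induct) (simp_all add: monom_power mult_monom mult.commute)

lemma mon_split:
  assumes "finite V" "s \<in> V" "v s = monom 1 1" "\<forall>i\<in>V - {s}. v i = monom (c i) 0"
  shows "mon V v m = monom (\<Prod>i\<in>V - {s}. c i ^ Poly_Mapping.lookup m i) (Poly_Mapping.lookup m s)"
proof -
  have "mon V v m = v s ^ Poly_Mapping.lookup m s * (\<Prod>i\<in>V - {s}. v i ^ Poly_Mapping.lookup m i)"
    unfolding mon_def using assms(1,2) by (simp add: prod.remove)
  also have "(\<Prod>i\<in>V - {s}. v i ^ Poly_Mapping.lookup m i) = (\<Prod>i\<in>V - {s}. monom (c i) 0 ^ Poly_Mapping.lookup m i)"
    by (rule prod.cong) (use assms(4) in auto)
  also have "\<dots> = monom (\<Prod>i\<in>V - {s}. c i ^ Poly_Mapping.lookup m i) 0"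
    by (rule prod_monom0) (use assms(1) in auto)
  finally show ?thesis using assms(3) by (simp add: monom_power mult_monom)
qed

lemma of_int_mult_monom: "of_int k * monom (c::'a::comm_ring_1) n = monom (of_int k * c) n"
  by (simp add: of_int_monom mult_monom)

lemma pm1_val: "pm1 h \<Longrightarrow> h 0 = 1 \<or> h 0 = -1"
  unfolding pm1_def kone_def by auto

lemma pm1_val0: "pm1 h \<Longrightarrow> m \<noteq> 0 \<Longrightarrow> h m = 0"
  unfolding pm1_def kone_def by auto

lemma coeff_top:
  fixes c :: "nat \<Rightarrow> 'a::{comm_ring_1, ring_char_0}"
  assumes V: "finite V" "s \<in> V" and vs: "v s = monom 1 1" and vc: "\<forall>i\<in>V - {s}. v i = monom (c i) 0"
    and f: "bnd f D" and p: "pm1 (slice s d f)"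
  shows "coeff (ev V D v f) d \<noteq> 0"
proof -
  define \<mu> where "\<mu> = Poly_Mapping.single s d"
  have fmu: "f \<mu> = 1 \<or> f \<mu> = -1" using pm1_val[OF p] by (simp add: slice_def \<mu>_def)
  have "f \<mu> \<noteq> 0" using fmu by auto
  then have "mdeg \<mu> \<le> D" using f by (simp add: bnd_def)
  then have muS: "\<mu> \<in> Sset V D" using V by (auto simp: Sset_def \<mu>_def)
  have zero: "f m = 0" if "Poly_Mapping.lookup m s = d" "m \<noteq> \<mu>" for m
  proof -
    define m' where "m' = m - Poly_Mapping.single s d"
    have mm: "m = m' + Poly_Mapping.single s d" unfolding m'_def
      using decomp_single[of m s] that(1) by (simp add: add.commute)
    have l: "Poly_Mapping.lookup m' s = 0" unfolding m'_def by (simp add: lookup_minus that)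
    have "m' \<noteq> 0" using mm that(2) by (auto simp: \<mu>_def)
    then have "slice s d f m' = 0" using pm1_val0[OF p] by blast
    then show ?thesis using l mm by (simp add: slice_def)
  qed
  have "coeff (ev V D v f) d = (\<Sum>m\<in>Sset V D. of_int (f m) * (if Poly_Mapping.lookup m s = d then (\<Prod>i\<in>V - {s}. c i ^ Poly_Mapping.lookup m i) else 0))"
    unfolding ev_def coeff_sum using mon_split[OF V vs vc]
    by (intro sum.cong) (auto simp: of_int_mult_monom)
  also have "\<dots> = (\<Sum>m\<in>Sset V D. if m = \<mu> then of_int (f \<mu>) else 0)"
  proof (rule sum.cong[OF refl])
    fix m assume "m \<in> Sset V D"
    show "of_int (f m) * (if Poly_Mapping.lookup m s = d then (\<Prod>i\<in>V - {s}. c i ^ Poly_Mapping.lookup m i) else 0) =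
          (if m = \<mu> then of_int (f \<mu>) else 0)"
    proof (cases "m = \<mu>")
      case True
      have "(\<Prod>i\<in>V - {s}. c i ^ Poly_Mapping.lookup \<mu> i) = 1"
        by (rule prod.neutral) (auto simp: \<mu>_def lookup_single when_def)
      then show ?thesis using True by (simp add: \<mu>_def)
    next
      case False then show ?thesis using zero by auto
    qed
  qed
  also have "\<dots> = of_int (f \<mu>)" using muS finite_Sset[OF V(1), of D] by simp
  finally show ?thesis using fmu by auto
qed

lemma Ev_three: "Ev v j 3 [a] = v j ^ a + v (Suc j) ^ a + v (Suc (Suc j)) ^ a" if "a > 0"
proof -
  have "Ev v j 3 [a] = v j ^ a * Ev v (Suc j) 2 [] + Ev v (Suc j) 2 [a]"
    using Ev_rec[OF that, of v j 2 "[]"] by (simp add: numeral_3_eq_3 numeral_2_eq_2)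
  also have "Ev v (Suc j) 2 [a] = v (Suc j) ^ a * Ev v (Suc (Suc j)) 1 [] + Ev v (Suc (Suc j)) 1 [a]"
    using Ev_rec[OF that, of v "Suc j" 1 "[]"] by (simp add: numeral_2_eq_2)
  also have "Ev v (Suc (Suc j)) 1 [a] = v (Suc (Suc j)) ^ a * Ev v (Suc (Suc (Suc j))) 0 [] + Ev v (Suc (Suc (Suc j))) 0 [a]"
    using Ev_rec[OF that, of v "Suc (Suc j)" 0 "[]"] by simp
  finally show ?thesis by (simp add: Ev_nil Ev_zero add.assoc)
qed

lemma ev_prod_Mj:
  assumes fK: "bnd f D1" and gK: "bnd g D2" and fg: "kmult f g = Mj \<beta> j"
  shows "ev {j..<j+L} D1 v f * ev {j..<j+L} D2 v g = Ev v j L \<beta>"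
proof -
  have "ev {j..<j+L} D1 v f * ev {j..<j+L} D2 v g = ev {j..<j+L} (D1 + D2) v (Mj \<beta> j)"
    using ev_mult[OF _ fK gK, of "{j..<j+L}" v] fg by simp
  also have "\<dots> = ev {j..<j+L} (sum_list \<beta>) v (Mj \<beta> j)"
    by (rule ev_indep2) (use bnd_kmult[OF fK gK] fg bnd_Mj in auto)
  also have "\<dots> = Ev v j L \<beta>" by (rule ev_Mj) simp
  finally show ?thesis .
qed

lemma exists_root_neg:
  assumes "b > 0" "n > 0"
  shows "\<exists>\<tau>::complex. \<tau> ^ b * of_nat n = -1"
proof -
  define r where "r = root b (1 / real n)"
  define \<tau> where "\<tau> = rcis r (pi / real b)"
  have "\<tau> ^ b = rcis (r ^ b) pi" unfolding \<tau>_def DeMoivre2 using assms by simp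
  also have "r ^ b = 1 / real n" unfolding r_def using assms by (simp add: real_root_pow_pos)
  finally have "\<tau> ^ b = - complex_of_real (1 / real n)" by (simp add: rcis_def)
  then have "\<tau> ^ b * of_nat n = -1" using assms by (simp add: field_simps)
  then show ?thesis by blast
qed

lemma case_k2:
  assumes fK: "f \<in> K" and gK: "g \<in> K" and fg: "kmult f g = Mj (a # b # \<gamma>) s"
    and pos: "\<forall>x\<in>set (a # b # \<gamma>). x > 0"
    and p: "pm1 (slice s d f)" and d: "d \<ge> 1"
  shows False
proof -
  obtain D1 D2 where f: "bnd f D1" and g: "bnd g D2" using fK gK K_bnd by blast
  have a: "a > 0" and b: "b > 0" and posg: "\<forall>x\<in>set \<gamma>. x > 0" using pos by auto
  define n where "n = Suc (length \<gamma>)"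
  obtain \<tau> :: complex where tau: "\<tau> ^ b * of_nat n = -1" using exists_root_neg[OF b, of n] n_def by auto
  define L where "L = Suc (Suc n)"
  define v :: "nat \<Rightarrow> complex poly" where "v = (\<lambda>i. if i = s then monom 1 1 else if i = Suc s then [:\<tau>:] else 1)"
  define c :: "nat \<Rightarrow> complex" where "c = (\<lambda>i. if i = Suc s then \<tau> else 1)"
  define V where "V = {s..<s+L}"
  have vc: "\<forall>i\<in>V - {s}. v i = monom (c i) 0" by (auto simp: v_def c_def monom_0)
  have ones: "\<forall>i\<in>{Suc (Suc s)..<Suc (Suc s) + n}. v i = 1" by (auto simp: v_def)
  have E1: "Ev v (Suc (Suc s)) n \<gamma> = of_nat n"
    using Ev_ones[OF ones posg] by (simp add: n_def)
  have "Ev v (Suc (Suc s)) n (b # \<gamma>) = of_nat (n choose length (b # \<gamma>))"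
    using Ev_ones[OF ones] pos by (metis list.set_intros(2))
  moreover have "n choose length (b # \<gamma>) = 1" by (simp add: n_def del: binomial_Suc_Suc)
  ultimately have E2: "Ev v (Suc (Suc s)) n (b # \<gamma>) = 1" by simp
  have "Ev v (Suc (Suc s)) n (a # b # \<gamma>) = of_nat (n choose length (a # b # \<gamma>))"
    using Ev_ones[OF ones] pos by blast
  moreover have "n choose length (a # b # \<gamma>) = 0" by (rule binomial_eq_0) (simp add: n_def)
  ultimately have E3: "Ev v (Suc (Suc s)) n (a # b # \<gamma>) = 0" by simp
  have "Ev v (Suc s) (Suc n) (b # \<gamma>) = [:\<tau>:] ^ b * of_nat n + 1"
    using Ev_rec[OF b, of v "Suc s" n \<gamma>] E1 E2 by (simp add: v_def)
  also have "\<dots> = [:\<tau> ^ b * of_nat n + 1:]"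
    by (simp add: monom_0[symmetric] monom_power of_nat_poly mult_monom add_monom[symmetric])
  also have "\<dots> = 0" using tau by simp
  finally have E4: "Ev v (Suc s) (Suc n) (b # \<gamma>) = 0" .
  have E5: "Ev v (Suc s) (Suc n) (a # b # \<gamma>) = [:\<tau>:] ^ a"
    using Ev_rec[OF a, of v "Suc s" n "b # \<gamma>"] E2 E3 by (simp add: v_def)
  have EM: "Ev v s L (a # b # \<gamma>) = [:\<tau> ^ a:]"
    using Ev_rec[OF a, of v s "Suc n" "b # \<gamma>"] E4 E5
    by (simp add: L_def v_def monom_0[symmetric] monom_power)
  define pf where "pf = ev V D1 v f"
  define pg where "pg = ev V D2 v g"
  have prod: "pf * pg = [:\<tau> ^ a:]" unfolding pf_def pg_def V_def
    using ev_prod_Mj[OF f g fg, of L v] EM by simp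
  have tau0: "\<tau> \<noteq> 0" using tau b by (auto simp: zero_power)
  then have "pf * pg \<noteq> 0" using prod by simp
  then have nz: "pf \<noteq> 0" "pg \<noteq> 0" by auto
  have "degree pf + degree pg = 0" using degree_mult_eq[OF nz] prod by simp
  moreover have "coeff pf d \<noteq> 0" unfolding pf_def
    by (rule coeff_top[OF _ _ _ vc f p]) (auto simp: V_def L_def v_def)
  then have "d \<le> degree pf" by (rule le_degree)
  ultimately show False using d by simp
qed

lemma case_k1:
  assumes fK: "f \<in> K" and gK: "g \<in> K" and fg: "kmult f g = Mj [a] s"
    and a: "a > 0"
    and pf1: "pm1 (slice s d f)" and pg1: "pm1 (slice s e g)" and d: "d \<ge> 1" and e: "e \<ge> 1" and de: "d + e = a"
  shows False
proof -
  obtain D1 D2 where f: "bnd f D1" and g: "bnd g D2" using fK gK K_bnd by blast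
  define \<omega> where "\<omega> = cis (pi / real a)"
  have om: "\<omega> ^ a = -1" unfolding \<omega>_def DeMoivre using a by simp
  have om0: "\<omega> \<noteq> 0" unfolding \<omega>_def by simp
  define V where "V = {s..<s+3}"
  define vA :: "nat \<Rightarrow> complex poly" where "vA = (\<lambda>i. if i = s then monom 1 1 else if i = Suc s then [:\<omega>:] else 1)"
  define vB :: "nat \<Rightarrow> complex poly" where "vB = (\<lambda>i. if i = s then 0 else if i = Suc s then monom 1 1 else 1)"
  define c :: "nat \<Rightarrow> complex" where "c = (\<lambda>i. if i = Suc s then \<omega> else 1)"
  have vc: "\<forall>i\<in>V - {s}. vA i = monom (c i) 0" by (auto simp: vA_def c_def monom_0)
  have EA: "Ev vA s 3 [a] = monom 1 a"
  proof -
    have "Ev vA s 3 [a] = monom 1 1 ^ a + [:\<omega>:] ^ a + 1" using Ev_three[OF a, of vA s] by (simp add: vA_def)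
    also have "[:\<omega>:] ^ a = monom (\<omega> ^ a) 0" by (simp add: monom_0[symmetric] monom_power)
    also have "\<dots> = - monom 1 0" using om by (simp only: minus_monom)
    also have "\<dots> = -1" by simp
    finally show ?thesis by (simp add: monom_power)
  qed
  have EB: "Ev vB s 3 [a] = monom 1 a + 1"
    using Ev_three[OF a, of vB s] a by (simp add: vB_def monom_power)
  define pf where "pf = ev V D1 vA f"
  define pg where "pg = ev V D2 vA g"
  define qf where "qf = ev V D1 vB f"
  define qg where "qg = ev V D2 vB g"
  have pA: "pf * pg = monom 1 a" unfolding pf_def pg_def V_def using ev_prod_Mj[OF f g fg, of 3 vA] EA by simp
  have pB: "qf * qg = monom 1 a + 1" unfolding qf_def qg_def V_def using ev_prod_Mj[OF f g fg, of 3 vB] EB by simp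
  have nzA: "pf * pg \<noteq> 0" using pA by simp
  then have nz: "pf \<noteq> 0" "pg \<noteq> 0" by auto
  have cf: "coeff pf d \<noteq> 0" unfolding pf_def
    by (rule coeff_top[OF _ _ _ vc f pf1]) (auto simp: V_def vA_def)
  have cg: "coeff pg e \<noteq> 0" unfolding pg_def
    by (rule coeff_top[OF _ _ _ vc g pg1]) (auto simp: V_def vA_def)
  have dp: "d \<le> degree pf" using cf by (rule le_degree)
  have dg: "e \<le> degree pg" using cg by (rule le_degree)
  have "degree pf + degree pg = a" using degree_mult_eq[OF nz] pA by (simp add: degree_monom_eq)
  then have dpf: "degree pf = d" and dpg: "degree pg = e" using dp dg de by auto
  have "order 0 pf + order 0 pg = order 0 (monom (1::complex) a)" using order_mult[OF nzA] pA by simp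
  also have "monom (1::complex) a = [:-0, 1:] ^ a" by (simp add: monom_altdef)
  also have "order 0 \<dots> = a" by (rule order_power_n_n)
  finally have osum: "order 0 pf + order 0 pg = a" .
  have "order 0 pf \<le> d" using order_degree[OF nz(1)] dpf by simp
  moreover have "order 0 pg \<le> e" using order_degree[OF nz(2)] dpg by simp
  ultimately have "order 0 pf = d" "order 0 pg = e" using osum de by auto
  then have r1: "poly pf 0 = 0" "poly pg 0 = 0" using d e by (auto simp: order_root)
  have same: "(\<lambda>i. poly (vA i) 0) = (\<lambda>i. poly (vB i) \<omega>)"
    by (rule ext) (simp add: vA_def vB_def poly_monom)
  have r2: "poly qf \<omega> = 0" "poly qg \<omega> = 0"
    using r1 unfolding pf_def pg_def qf_def qg_def poly_ev same by auto
  define P where "P = monom (1::complex) a + 1"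
  have "poly P 0 = 1" using a by (simp add: P_def poly_monom)
  then have P0: "P \<noteq> 0" by auto
  have nzB: "qf * qg \<noteq> 0" using pB P0 by (simp add: P_def)
  then have nzq: "qf \<noteq> 0" "qg \<noteq> 0" by auto
  have "order \<omega> qf \<noteq> 0" "order \<omega> qg \<noteq> 0" using r2 nzq by (auto simp: order_root)
  then have ge2: "order \<omega> P \<ge> 2" using order_mult[OF nzB] pB unfolding P_def by simp
  have Pw: "poly P \<omega> = 0" unfolding P_def using om by (simp add: poly_monom)
  have dP: "pderiv P = monom (of_nat a) (a - 1)" unfolding P_def by (simp add: pderiv_add pderiv_monom)
  have "poly (pderiv P) \<omega> \<noteq> 0" unfolding dP using a om0 by (simp add: poly_monom)
  then have "order \<omega> (pderiv P) = 0" by (rule order_0I)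
  then have "order \<omega> P = 1" using order_pderiv[OF P0 Pw] by simp
  then show False using ge2 by simp
qed



lemma Mj_nil: "Mj [] s = kone"
  unfolding Mj_def kone_def by (auto simp: compress_nil_iff intro!: ext)

lemma one_side:
  assumes fK: "f \<in> K" and gK: "g \<in> K" and fg: "kmult f g = Mj (a # \<beta>) s"
    and pos: "\<forall>x\<in>set (a # \<beta>). x > 0"
    and xf: "xdeg_le s f d" and xg: "xdeg_le s g e" and de: "d + e = a"
    and sl: "kmult (slice s d f) (slice s e g) = Mj \<beta> (Suc s)"
    and p: "pm1 (slice s d f)"
  shows "pm1 f \<or> pm1 g"
proof (cases "d = 0")
  case True
  then have "slice s 0 f = f" using xf slice0_eq by simp
  then show ?thesis using p True by simp
next
  case False
  then have d1: "d \<ge> 1" by simp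
  show ?thesis
  proof (cases \<beta>)
    case Nil
    have "kmult (slice s e g) (slice s d f) = kone" using sl Nil Mj_nil kmult_commute by metis
    then have pg: "pm1 (slice s e g)" by (rule units_pm1[OF slice_K[OF gK] slice_K[OF fK]])
    show ?thesis
    proof (cases "e = 0")
      case True
      then have "slice s 0 g = g" using xg slice0_eq by simp
      then show ?thesis using pg True by simp
    next
      case False
      have a: "a > 0" using pos by simp
      have "False"
        by (rule case_k1[OF fK gK _ a p pg d1 _ de]) (use fg Nil False in auto)
      then show ?thesis ..
    qed
  next
    case (Cons b \<gamma>)
    have False by (rule case_k2[OF fK gK _ _ p d1]) (use fg pos Cons in auto)
    then show ?thesis ..
  qed
qed

lemma core:
  assumes "\<forall>x\<in>set \<alpha>. x > 0"
  shows "\<forall>s f g. f \<in> K \<longrightarrow> g \<in> K \<longrightarrow> kmult f g = Mj \<alpha> s \<longrightarrow> pm1 f \<or> pm1 g"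
  using assms
proof (induction \<alpha>)
  case Nil
  then show ?case using units_pm1 Mj_nil by metis
next
  case (Cons a \<beta>)
  show ?case
  proof (intro allI impI)
    fix s f g assume fK: "f \<in> K" and gK: "g \<in> K" and fg: "kmult f g = Mj (a # \<beta>) s"
    have a: "a > 0" and pb: "\<forall>x\<in>set \<beta>. x > 0" using Cons.prems by auto
    obtain d e where xf: "xdeg_le s f d" and xg: "xdeg_le s g e" and de: "d + e = a"
      and sl: "kmult (slice s d f) (slice s e g) = Mj \<beta> (Suc s)"
      using top_split[OF a pb fK gK fg] by blast
    have "pm1 (slice s d f) \<or> pm1 (slice s e g)"
      using Cons.IH[OF pb] slice_K[OF fK] slice_K[OF gK] sl by blast
    then show "pm1 f \<or> pm1 g"
    proof
      assume "pm1 (slice s d f)"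
      then show ?thesis by (rule one_side[OF fK gK fg Cons.prems xf xg de sl])
    next
      assume p: "pm1 (slice s e g)"
      have gf: "kmult g f = Mj (a # \<beta>) s" using fg kmult_commute by metis
      have sl': "kmult (slice s e g) (slice s d f) = Mj \<beta> (Suc s)" using sl kmult_commute by metis
      have ed: "e + d = a" using de by simp
      show ?thesis using one_side[OF gK fK gf Cons.prems xg xf ed sl' p] by blast
    qed
  qed
qed

theorem proposition8p10:
  assumes "is_composition \<alpha>"
  shows "irreducible_in QSym (M \<alpha>) \<and> irreducible_in K (M \<alpha>)"
proof -
  have ne: "\<alpha> \<noteq> []" and pos: "\<forall>x\<in>set \<alpha>. x > 0" using assms unfolding is_composition_def by auto
  have MK: "M \<alpha> \<in> K" unfolding M_Mj by (rule Mj_K)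
  have MQ: "M \<alpha> \<in> QSym" using MK unfolding QSym_def monomialQ_def by auto
  have Mnz: "M \<alpha> \<noteq> kzero" unfolding M_Mj kzero_def using Mj_nonzero[OF pos] by simp
  have M0: "M \<alpha> 0 = 0" using ne compress_nil_iff[of 0] by (simp add: monomialQ_def)
  have nuK: "\<not> unit_in K (M \<alpha>)"
  proof
    assume "unit_in K (M \<alpha>)"
    then have "pm1 (M \<alpha>)" by (rule unit_pm1)
    then show False using pm1_val M0 by fastforce
  qed
  have QK: "QSym \<subseteq> K" unfolding QSym_def by auto
  have nuQ: "\<not> unit_in QSym (M \<alpha>)"
    using nuK QK unfolding unit_in_def by blast
  have fac: "pm1 a \<or> pm1 b" if "a \<in> K" "b \<in> K" "M \<alpha> = kmult a b" for a b
    using core[OF pos] that unfolding M_Mj by metis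
  have irrK: "irreducible_in K (M \<alpha>)"
    unfolding irreducible_in_def using MK Mnz nuK fac pm1_unit by metis
  have irrQ: "irreducible_in QSym (M \<alpha>)"
    unfolding irreducible_in_def using MQ Mnz nuQ fac pm1_unit QK by (metis subsetD)
  show ?thesis using irrK irrQ by blast
qed

end
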